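(* Let $\Gamma$ be a countably infinite group with a strictly decreasing sequence $\{\Gamma_n\}$ of finite-index normal subgroups with trivial intersection, $X=\varprojlim\Gamma/\Gamma_n$ with left translation action and quotient maps $\pi_n:X\to\Gamma/\Gamma_n$, and for $n\ge2$ let $\gamma_n\in\Gamma_{n-1}\setminus\Gamma_n$ and $C_n=\pi_n^{-1}(\gamma_n\Gamma_n)$. Let $s_1,s_2\in\Gamma$ and $x,y\in X$ with $s_1x\in C_{n_1}$, $s_2x\in C_{n_2}$ where $n_1<n_2$, and $s_1y\notin C_{n_1}$, $s_2y\in C_{m_2}$. Then $m_2\le n_1$.
   Context: $X=\varprojlim\Gamma/\Gamma_n$ is the compact group of compatible sequences in $\prod_n\Gamma/\Gamma_n$ containing $\Gamma$ as a subgroup; $\Gamma$ acts by left translation. All indices $n_1,n_2,m_2$ are $\ge2$. *)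

theory Defs
  imports "HOL-Algebra.Algebra"
begin

text \<open>The subgroups are indexed \<open>N 1, N 2, ...\<close>. An element of the inverse limit
  X = lim Gamma/Gamma_n is a compatible sequence of left cosets \<open>x n = a_n Gamma_n\<close>
  (n >= 1), compatibility meaning that the coset at level n+1 projects to the
  coset at level n, i.e. is contained in it. The unused index 0 is normalised
  to the whole group.\<close>

definition invlim :: "('a, 'b) monoid_scheme \<Rightarrow> (nat \<Rightarrow> 'a set) \<Rightarrow> (nat \<Rightarrow> 'a set) set" where
  "invlim G N = {x. x 0 = carrier G
      \<and> (\<forall>n\<ge>1. \<exists>a\<in>carrier G. x n = a <#\<^bsub>G\<^esub> N n)
      \<and> (\<forall>n\<ge>1. x (Suc n) \<subseteq> x n)}"

definition transl :: "('a, 'b) monoid_scheme \<Rightarrow> 'a \<Rightarrow> (nat \<Rightarrow> 'a set) \<Rightarrow> (nat \<Rightarrow> 'a set)" where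
  "transl G s x = (\<lambda>n. s <#\<^bsub>G\<^esub> x n)"

definition proj :: "(nat \<Rightarrow> 'a set) \<Rightarrow> nat \<Rightarrow> 'a set" where
  "proj x n = x n"

definition cyl :: "('a, 'b) monoid_scheme \<Rightarrow> (nat \<Rightarrow> 'a set) \<Rightarrow> (nat \<Rightarrow> 'a) \<Rightarrow> nat \<Rightarrow> (nat \<Rightarrow> 'a set) set" where
  "cyl G N g n = {x \<in> invlim G N. proj x n = g n <#\<^bsub>G\<^esub> N n}"

end

theory Submission
  imports Defs
begin

theorem lemma4p5:
  fixes G :: "('a, 'b) monoid_scheme"
    and N :: "nat \<Rightarrow> 'a set"
    and g :: "nat \<Rightarrow> 'a"
    and s1 s2 :: 'a
    and x y :: "nat \<Rightarrow> 'a set"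
    and n1 n2 m2 :: nat
  assumes grp: "group G"
    and cnt: "countable (carrier G)" and inf: "infinite (carrier G)"
    and nrm: "\<And>n. n \<ge> 1 \<Longrightarrow> N n \<lhd> G"
    and fin_idx: "\<And>n. n \<ge> 1 \<Longrightarrow> finite (rcosets\<^bsub>G\<^esub> (N n))"
    and decr: "\<And>n. n \<ge> 1 \<Longrightarrow> N (Suc n) \<subset> N n"
    and triv: "(\<Inter>n\<in>{1..}. N n) = {\<one>\<^bsub>G\<^esub>}"
    and gam: "\<And>n. n \<ge> 2 \<Longrightarrow> g n \<in> N (n - 1) - N n"
    and s: "s1 \<in> carrier G" "s2 \<in> carrier G"
    and xy: "x \<in> invlim G N" "y \<in> invlim G N"
    and idx: "n1 \<ge> 2" "n2 \<ge> 2" "m2 \<ge> 2" "n1 < n2"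
    and hx1: "transl G s1 x \<in> cyl G N g n1"
    and hx2: "transl G s2 x \<in> cyl G N g n2"
    and hy1: "transl G s1 y \<notin> cyl G N g n1"
    and hy2: "transl G s2 y \<in> cyl G N g m2"
  shows "m2 \<le> n1"
proof (rule ccontr)
  assume "\<not> m2 \<le> n1"
  hence mn: "n1 < m2" by simp
  interpret group G by (rule grp)
  have sg: "\<And>n. n \<ge> 1 \<Longrightarrow> subgroup (N n) G" using nrm normal_imp_subgroup by blast
  have sgn1: "subgroup (N n1) G" using sg idx by simp
  have Nmono: "N m \<subseteq> N n" if "n \<ge> 1" "n \<le> m" for n m
    using that(2,1)
  proof (induction m rule: dec_induct)
    case base then show ?case by simp
  next
    case (step k) then show ?case using decr[of k] by auto
  qed
  have xmono: "z m \<subseteq> z n" if "z \<in> invlim G N" "n \<ge> 1" "n \<le> m" for z n m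
  proof -
    have zs: "\<forall>n\<ge>1. z (Suc n) \<subseteq> z n" using that(1) unfolding invlim_def by blast
    show ?thesis using that(3,2)
    proof (induction m rule: dec_induct)
      case base then show ?case by simp
    next
      case (step k) 
      have "z (Suc k) \<subseteq> z k" using zs step.hyps(1) step.prems by simp
      then show ?case using step by blast
    qed
  qed
  have rep: "\<exists>a\<in>carrier G. z n = a <#\<^bsub>G\<^esub> N n" if "z \<in> invlim G N" "n \<ge> 1" for z n
    using that unfolding invlim_def by blast
  have trans_eq: "transl G t z n = (t \<otimes>\<^bsub>G\<^esub> a) <#\<^bsub>G\<^esub> N n" if "t \<in> carrier G" "a \<in> carrier G" "z n = a <#\<^bsub>G\<^esub> N n" "n \<ge> 1" for t a z n
    unfolding transl_def using that lcos_m_assoc[of "N n" t a] sg[of n] subgroup.subset by fastforce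
  have gsub: "g n <#\<^bsub>G\<^esub> N n \<subseteq> N n1" if "n1 < n" for n
  proof -
    have n2: "n \<ge> 2" using that idx by simp
    have "N (n - 1) \<subseteq> N n1" using Nmono[of n1 "n - 1"] that idx by simp
    moreover have "N n \<subseteq> N (n - 1)" using Nmono[of "n - 1" n] n2 by simp
    moreover have "g n \<in> N (n - 1)" using gam n2 by blast
    ultimately show ?thesis using sg[of n1] idx unfolding l_coset_def
      by (auto intro: subgroup.m_closed)
  qed
  obtain c where c: "c \<in> carrier G" "x n2 = c <#\<^bsub>G\<^esub> N n2" using rep[OF xy(1), of n2] idx by auto
  have cx: "c \<in> x n1" using c xmono[OF xy(1), of n1 n2] idx lcos_self[OF c(1) sg[of n2]] by auto
  have "transl G s2 x n2 = g n2 <#\<^bsub>G\<^esub> N n2" using hx2 unfolding cyl_def proj_def by auto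
  hence "(s2 \<otimes>\<^bsub>G\<^esub> c) <#\<^bsub>G\<^esub> N n2 = g n2 <#\<^bsub>G\<^esub> N n2" using trans_eq[of s2 c x n2, OF s(2) c] idx by simp
  hence s2c: "s2 \<otimes>\<^bsub>G\<^esub> c \<in> N n1" using gsub[of n2] idx lcos_self[of "s2 \<otimes>\<^bsub>G\<^esub> c" "N n2"] sg[of n2] s c by auto
  obtain a where a: "a \<in> carrier G" "x n1 = a <#\<^bsub>G\<^esub> N n1" using rep[OF xy(1), of n1] idx by auto
  have "transl G s1 x n1 = g n1 <#\<^bsub>G\<^esub> N n1" using hx1 unfolding cyl_def proj_def by auto
  hence s1a: "(s1 \<otimes>\<^bsub>G\<^esub> a) <#\<^bsub>G\<^esub> N n1 = g n1 <#\<^bsub>G\<^esub> N n1" using trans_eq[of s1 a x n1, OF s(1) a] idx by simp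
  have s1c: "s1 \<otimes>\<^bsub>G\<^esub> c \<in> g n1 <#\<^bsub>G\<^esub> N n1"
  proof -
    obtain h where h: "h \<in> N n1" "c = a \<otimes>\<^bsub>G\<^esub> h" using cx a unfolding l_coset_def by auto
    have hc: "h \<in> carrier G" by (rule subgroup.mem_carrier[OF sgn1 h(1)])
    have "s1 \<otimes>\<^bsub>G\<^esub> c = (s1 \<otimes>\<^bsub>G\<^esub> a) \<otimes>\<^bsub>G\<^esub> h" using h hc a s by (simp add: m_assoc)
    hence "s1 \<otimes>\<^bsub>G\<^esub> c \<in> (s1 \<otimes>\<^bsub>G\<^esub> a) <#\<^bsub>G\<^esub> N n1" using h unfolding l_coset_def by auto
    thus ?thesis using s1a by simp
  qed
  obtain d where d: "d \<in> carrier G" "y m2 = d <#\<^bsub>G\<^esub> N m2" using rep[OF xy(2), of m2] idx by auto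
  have dy: "d \<in> y n1" using d xmono[OF xy(2), of n1 m2] idx mn lcos_self[OF d(1) sg[of m2]] by auto
  have "transl G s2 y m2 = g m2 <#\<^bsub>G\<^esub> N m2" using hy2 unfolding cyl_def proj_def by auto
  hence "(s2 \<otimes>\<^bsub>G\<^esub> d) <#\<^bsub>G\<^esub> N m2 = g m2 <#\<^bsub>G\<^esub> N m2" using trans_eq[of s2 d y m2, OF s(2) d] idx by simp
  hence s2d: "s2 \<otimes>\<^bsub>G\<^esub> d \<in> N n1" using gsub[of m2] mn idx lcos_self[of "s2 \<otimes>\<^bsub>G\<^esub> d" "N m2"] sg[of m2] s d by auto
  obtain b where b: "b \<in> carrier G" "y n1 = b <#\<^bsub>G\<^esub> N n1" using rep[OF xy(2), of n1] idx by auto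
  obtain h where h: "h \<in> N n1" "s1 \<otimes>\<^bsub>G\<^esub> c = g n1 \<otimes>\<^bsub>G\<^esub> h" using s1c unfolding l_coset_def by auto
  have gN: "g n1 \<in> N (n1 - 1)" using gam[of n1] idx by auto
  have sgm: "subgroup (N (n1 - 1)) G" using sg[of "n1 - 1"] idx by simp
  have gc: "g n1 \<in> carrier G" by (rule subgroup.mem_carrier[OF sgm gN])
  have hc: "h \<in> carrier G" by (rule subgroup.mem_carrier[OF sgn1 h(1)])
  have h2: "inv\<^bsub>G\<^esub> (s2 \<otimes>\<^bsub>G\<^esub> c) \<otimes>\<^bsub>G\<^esub> (s2 \<otimes>\<^bsub>G\<^esub> d) \<in> N n1"
    using s2c s2d sgn1 by (simp add: subgroup.m_closed subgroup.m_inv_closed)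
  have "s1 \<otimes>\<^bsub>G\<^esub> d = (s1 \<otimes>\<^bsub>G\<^esub> c) \<otimes>\<^bsub>G\<^esub> (inv\<^bsub>G\<^esub> (s2 \<otimes>\<^bsub>G\<^esub> c) \<otimes>\<^bsub>G\<^esub> (s2 \<otimes>\<^bsub>G\<^esub> d))"
    using s c d by (simp add: m_assoc inv_mult_group) (simp add: m_assoc[symmetric])
  also have "\<dots> = g n1 \<otimes>\<^bsub>G\<^esub> (h \<otimes>\<^bsub>G\<^esub> (inv\<^bsub>G\<^esub> (s2 \<otimes>\<^bsub>G\<^esub> c) \<otimes>\<^bsub>G\<^esub> (s2 \<otimes>\<^bsub>G\<^esub> d)))"
    using h gc hc s c d by (simp add: m_assoc)
  finally have m1: "s1 \<otimes>\<^bsub>G\<^esub> d \<in> g n1 <#\<^bsub>G\<^esub> N n1"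
    using h h2 sgn1 unfolding l_coset_def by (auto intro: subgroup.m_closed)
  have m2: "s1 \<otimes>\<^bsub>G\<^esub> d \<in> (s1 \<otimes>\<^bsub>G\<^esub> b) <#\<^bsub>G\<^esub> N n1"
  proof -
    obtain k where k: "k \<in> N n1" "d = b \<otimes>\<^bsub>G\<^esub> k" using dy b unfolding l_coset_def by auto
    have kc: "k \<in> carrier G" by (rule subgroup.mem_carrier[OF sgn1 k(1)])
    have "s1 \<otimes>\<^bsub>G\<^esub> d = (s1 \<otimes>\<^bsub>G\<^esub> b) \<otimes>\<^bsub>G\<^esub> k" using k kc b s by (simp add: m_assoc)
    thus ?thesis using k unfolding l_coset_def by auto
  qed
  have sb: "s1 \<otimes>\<^bsub>G\<^esub> b \<in> carrier G" using s b by simp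
  have e1: "(s1 \<otimes>\<^bsub>G\<^esub> b) <#\<^bsub>G\<^esub> N n1 = (s1 \<otimes>\<^bsub>G\<^esub> d) <#\<^bsub>G\<^esub> N n1"
    by (rule l_repr_independence[OF m2 sb sgn1])
  have e2: "g n1 <#\<^bsub>G\<^esub> N n1 = (s1 \<otimes>\<^bsub>G\<^esub> d) <#\<^bsub>G\<^esub> N n1"
    by (rule l_repr_independence[OF m1 gc sgn1])
  have eq: "(s1 \<otimes>\<^bsub>G\<^esub> b) <#\<^bsub>G\<^esub> N n1 = g n1 <#\<^bsub>G\<^esub> N n1"
    using e1 e2 by simp
  have "transl G s1 y \<in> invlim G N"
  proof -
    have "transl G s1 y 0 = carrier G"
    proof -
      have y0: "y 0 = carrier G" using xy(2) unfolding invlim_def by blast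
      have "s1 <#\<^bsub>G\<^esub> carrier G \<subseteq> carrier G" using l_coset_subset_G[OF subset_refl s(1)] .
      moreover have "carrier G \<subseteq> s1 <#\<^bsub>G\<^esub> carrier G"
      proof
        fix z assume z: "z \<in> carrier G"
        have "z = s1 \<otimes>\<^bsub>G\<^esub> (inv\<^bsub>G\<^esub> s1 \<otimes>\<^bsub>G\<^esub> z)" using z s(1) by (simp add: m_assoc[symmetric])
        moreover have "inv\<^bsub>G\<^esub> s1 \<otimes>\<^bsub>G\<^esub> z \<in> carrier G" using z s(1) by simp
        ultimately show "z \<in> s1 <#\<^bsub>G\<^esub> carrier G" unfolding l_coset_def by blast
      qed
      ultimately have "s1 <#\<^bsub>G\<^esub> carrier G = carrier G" by (rule equalityI)
      thus ?thesis unfolding transl_def y0 .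
    qed
    moreover have "\<forall>n\<ge>1. \<exists>a\<in>carrier G. transl G s1 y n = a <#\<^bsub>G\<^esub> N n"
    proof (intro allI impI)
      fix n :: nat assume n: "n \<ge> 1"
      obtain a where a: "a \<in> carrier G" "y n = a <#\<^bsub>G\<^esub> N n" using rep[OF xy(2) n] by blast
      show "\<exists>a\<in>carrier G. transl G s1 y n = a <#\<^bsub>G\<^esub> N n"
        using trans_eq[of s1 a y n, OF s(1) a n] a s(1) by (intro bexI[of _ "s1 \<otimes>\<^bsub>G\<^esub> a"]) simp_all
    qed
    moreover have "\<forall>n\<ge>1. transl G s1 y (Suc n) \<subseteq> transl G s1 y n"
    proof -
      have "\<forall>n\<ge>1. y (Suc n) \<subseteq> y n" using xy(2) unfolding invlim_def by blast
      thus ?thesis unfolding transl_def l_coset_def by blast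
    qed
    ultimately show ?thesis unfolding invlim_def by blast
  qed
  hence "transl G s1 y \<in> cyl G N g n1"
    unfolding cyl_def proj_def using trans_eq[of s1 b y n1, OF s(1) b] idx eq by simp
  thus False using hy1 by simp
qed

end
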